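(* In the queueing model of the context, fix $\theta\ge0$ and let $\vec b=(b_1,\dots,b_n)$ with $b_i=\widetilde{B(\mathcal J_i)}(\theta)$. Then: (a) for every service-arrival joint distribution $\mathcal V$, $\widetilde{B(\mathcal V)}(\theta)=\widetilde{\mathcal V}(\theta,\vec b)$; (b) $\vec b$ is the least (componentwise) nonnegative solution of the system $b_i=\widetilde{\mathcal J_i}(\theta,\vec b)$, $i=1,\dots,n$.
   Context: Model: a single server; job classes $1,\dots,n$. Class $i$ jobs arrive according to independent Poisson processes of rates $\lambda_i>0$; original sizes of class $i$ jobs are i.i.d. with positive distribution $S_i$. Scheduling is preemptive priority (lower index = higher priority, FCFS within class, preempt-resume) with preemption overhead: when a class $k$ job in service is preempted by the arrival of a class $<k$ job, a nonpreemptible class $k$ pause (length $\sim C_k$) begins; whenever a job or pause completes and jobs remain, the best-priority job is identified and, if it is a previously paused class $k$ job, a nonpreemptible class $k$ resume (length $\sim D_k$) begins, else that job starts service; when a class $k$ resume completes, if a class $<k$ job arrived during it the resume fails and a class $k$ pause begins, otherwise the job continues service. Overhead lengths are i.i.d. and independent of everything else. A class $k$ job's pauses and resumes are attributed to it: its effective size is $R_k$ = original size plus total length of its pauses and resumes, and $A_{k,i}$ is the number of class $i$ arrivals during its effective service time; $\mathcal J_k=(R_k,\vec A_k)$ with $\vec A_k=(A_{k,1},\dots,A_{k,n})$ is the class $k$ job joint distribution. A service-arrival joint distribution is a joint distribution $\mathcal V=(R_{\mathcal V},\vec A_{\mathcal V})$ on $\mathbb R_+\times\mathbb Z_+^n$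 (components possibly dependent); its service-arrival joint transform is $\widetilde{\mathcal V}(\theta,\vec z)=\mathbb E\bigl[e^{-\theta R_{\mathcal V}}\prod_{i=1}^n z_i^{A_{\mathcal V,i}}\bigr]$. The job joint transform is $\widetilde{\mathcal J_k}$. The busy period started by $\mathcal V$, $B(\mathcal V)$, is the sum of the duration components over all nodes of the multitype Galton–Watson tree whose root draws $(R_{\mathcal V},\vec A_{\mathcal V})\sim\mathcal V$ and has $A_{\mathcal V,i}$ children of class $i$, where each class $i$ node independently draws $(R_i,\vec A_i)\sim\mathcal J_i$ and has $A_{i,j}$ children of class $j$, recursively; equivalently $B(\mathcal V)\stackrel{d}{=}R_{\mathcal V}+\sum_{i=1}^n\sum_{j=1}^{A_{\mathcal V,i}}B(\mathcal J_i)^{(j)}$ with the $B(\mathcal J_i)^{(j)}$ independent copies, independent of $\mathcal V$. $\widetilde X(\theta)=\mathbb E[e^{-\theta X}]$ (with $e^{-\theta\cdot\infty}=0$). *)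

theory Defs
  imports "HOL-Probability.Probability"
begin

text \<open>Classes are the elements of a finite type 'n. A service-arrival joint
distribution is a probability measure on real \<times> ('n \<Rightarrow> nat): the first
component is the duration, the second the vector of arrival counts per class.\<close>

type_synonym 'n sa = "real \<times> ('n \<Rightarrow> nat)"

text \<open>Laplace transform of an extended nonnegative value, with exp(-theta * infinity) = 0.\<close>
definition lt_enn :: "real \<Rightarrow> ennreal \<Rightarrow> real" where
  "lt_enn \<theta> x = (if x = \<top> then 0 else exp (- \<theta> * enn2real x))"

definition sa_transform :: "'n::finite sa measure \<Rightarrow> real \<Rightarrow> ('n \<Rightarrow> real) \<Rightarrow> ennreal" where
  "sa_transform M \<theta> z =
     (\<integral>\<^sup>+ x. ennreal (exp (- \<theta> * fst x) * (\<Prod>i\<in>UNIV. z i ^ snd x i)) \<partial>M)"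

text \<open>Multitype Galton--Watson tree, Ulam--Harris labelling: a node is a list of
(class, index) pairs. The root [] draws from V; a node whose label ends in (j,k)
is a class j node and draws independently from J j. Node u @ [(j,k)] exists iff
u exists and k is less than the number of class j arrivals drawn at u.\<close>
definition gw_space ::
  "'n sa measure \<Rightarrow> ('n \<Rightarrow> 'n sa measure) \<Rightarrow> (('n \<times> nat) list \<Rightarrow> 'n sa) measure" where
  "gw_space V J = (\<Pi>\<^sub>M u\<in>UNIV. if u = [] then V else J (fst (last u)))"

definition gw_node :: "(('n \<times> nat) list \<Rightarrow> 'n sa) \<Rightarrow> ('n \<times> nat) list \<Rightarrow> bool" where
  "gw_node \<omega> u \<longleftrightarrow> (\<forall>m < length u. snd (u ! m) < snd (\<omega> (take m u)) (fst (u ! m)))"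

definition busy :: "(('n \<times> nat) list \<Rightarrow> 'n sa) \<Rightarrow> ennreal" where
  "busy \<omega> = (\<integral>\<^sup>+ u. (if gw_node \<omega> u then ennreal (fst (\<omega> u)) else 0) \<partial>count_space UNIV)"

definition busy_transform :: "'n sa measure \<Rightarrow> ('n \<Rightarrow> 'n sa measure) \<Rightarrow> real \<Rightarrow> real" where
  "busy_transform V J \<theta> = (\<integral> \<omega>. lt_enn \<theta> (busy \<omega>) \<partial>gw_space V J)"

end

theory Submission
  imports Defs
begin

lemma snd_cont: "continuous_on UNIV (\<lambda>x::'n::finite sa. snd x i)"
proof -
  have "continuous_on UNIV ((\<lambda>f::'n\<Rightarrow>nat. f i) \<circ> snd)"
    by (intro continuous_on_compose continuous_on_snd continuous_on_id) simp
  then show ?thesis by (simp add: o_def)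
qed

lemma snd_meas[measurable]: "(\<lambda>x::'n::finite sa. snd x) \<in> measurable borel (count_space UNIV)"
proof (subst measurable_count_space_eq2_countable, intro conjI ballI)
  show "snd \<in> space borel \<rightarrow> (UNIV :: ('n \<Rightarrow> nat) set)" by simp
next
  fix a :: "'n \<Rightarrow> nat"
  have m: "(\<lambda>x::'n::finite sa. snd x i) \<in> borel_measurable borel" for i
    using borel_measurable_continuous_onI[OF snd_cont[of i]] by simp
  have A: "{x::'n sa. snd x i = a i} \<in> sets borel" for i
    using measurable_sets[OF m[of i], of "{a i}"] by (simp add: vimage_def)
  have "(\<Inter>i. {x::'n sa. snd x i = a i}) \<in> sets borel"
    using A by (intro sets.countable_INT) auto
  moreover have "(snd::'n sa \<Rightarrow> _) -` {a} = (\<Inter>i. {x::'n sa. snd x i = a i})" by auto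
  ultimately show "(snd::'n sa \<Rightarrow> _) -` {a} \<inter> space borel \<in> sets borel" by (simp only: space_borel Int_UNIV_right)
qed

lemma fst_meas[measurable]: "(\<lambda>x::'n::finite sa. fst x) \<in> borel_measurable borel"
  by (intro borel_measurable_continuous_onI continuous_on_fst continuous_on_id)

definition Mi :: "'n sa measure \<Rightarrow> ('n \<Rightarrow> 'n sa measure) \<Rightarrow> ('n \<times> nat) list \<Rightarrow> 'n sa measure" where
  "Mi V J u = (if u = [] then V else J (fst (last u)))"

definition sh :: "('n \<times> nat) \<Rightarrow> (('n \<times> nat) list \<Rightarrow> 'a) \<Rightarrow> (('n \<times> nat) list \<Rightarrow> 'a)" where
  "sh p \<omega> = (\<lambda>w. \<omega> (p # w))"

definition glue :: "'a \<times> (('n \<times> nat) \<Rightarrow> (('n \<times> nat) list \<Rightarrow> 'a)) \<Rightarrow> (('n \<times> nat) list \<Rightarrow> 'a)" where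
  "glue z u = (case u of [] \<Rightarrow> fst z | p # w \<Rightarrow> snd z p w)"

abbreviation SG :: "(('n::finite \<times> nat) list \<Rightarrow> 'n sa) measure" where
  "SG \<equiv> PiM UNIV (\<lambda>_. borel)"

lemma space_SG[simp]: "space SG = UNIV"
  by (simp add: space_PiM PiE_def extensional_def)

lemma sh_glue[simp]: "sh p (glue z) = snd z p"
  by (simp add: sh_def glue_def fun_eq_iff)

lemma glue_Nil[simp]: "glue z [] = fst z"
  by (simp add: glue_def)

lemma sh_meas[measurable]: "sh p \<in> measurable SG SG"
  unfolding sh_def by (rule measurable_PiM_single') auto

lemma root_meas[measurable]: "(\<lambda>\<omega>. \<omega> u) \<in> measurable SG borel"
  by simp

lemma cyl_eq: "(\<And>i. space (M i) = UNIV) \<Longrightarrow> prod_emb UNIV M K (Pi\<^sub>E K A) = {f. \<forall>i\<in>K. f i \<in> A i}"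
  by (auto simp: prod_emb_def PiE_def extensional_def Pi_def)

lemma emeasure_cyl:
  assumes "\<And>i. prob_space (M i)" "\<And>i. space (M i) = UNIV" "finite K" "\<And>i. i \<in> K \<Longrightarrow> A i \<in> sets (M i)"
  shows "emeasure (PiM UNIV M) {f. \<forall>i\<in>K. f i \<in> A i} = (\<Prod>i\<in>K. emeasure (M i) (A i))"
  using emeasure_PiM_emb[of UNIV M K A] assms cyl_eq[of M K A] by simp

lemma sets_cyl:
  assumes "\<And>i. space (M i) = UNIV" "finite K" "\<And>i. i \<in> K \<Longrightarrow> A i \<in> sets (M i)"
  shows "{f. \<forall>i\<in>K. f i \<in> A i} \<in> sets (PiM UNIV M)"
proof -
  have "prod_emb UNIV M K (Pi\<^sub>E K A) \<in> sets (PiM UNIV M)"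
    using assms by (intro sets_PiM_I) auto
  then show ?thesis using cyl_eq[of M K A] assms by simp
qed

locale gwJ =
  fixes J :: "'n::finite \<Rightarrow> 'n sa measure"
  assumes Jp: "\<And>i. prob_space (J i)" and Js: "\<And>i. sets (J i) = sets borel"
begin

abbreviation G where "G j \<equiv> gw_space (J j) J"
abbreviation PP where "PP \<equiv> PiM (UNIV :: ('n \<times> nat) set) (\<lambda>p. G (fst p))"

lemma Jspace[simp]: "space (J i) = UNIV"
  using sets_eq_imp_space_eq[OF Js[of i]] by simp

lemma Mi_sets: "sets V = sets borel \<Longrightarrow> sets (Mi V J u) = sets borel"
  by (simp add: Mi_def Js)

lemma Mi_prob: "prob_space V \<Longrightarrow> prob_space (Mi V J u)"
  by (simp add: Mi_def Jp)

lemma Mi_space: "sets V = sets borel \<Longrightarrow> space (Mi V J u) = UNIV"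
  using sets_eq_imp_space_eq[OF Mi_sets] by simp

lemma gw_eq: "gw_space V J = PiM UNIV (Mi V J)"
  by (simp add: gw_space_def Mi_def[abs_def])

lemma sets_gw: "sets V = sets borel \<Longrightarrow> sets (gw_space V J) = sets SG"
  unfolding gw_eq by (intro sets_PiM_cong) (auto simp: Mi_sets)

lemma space_gw[simp]: "sets V = sets borel \<Longrightarrow> space (gw_space V J) = UNIV"
  using sets_eq_imp_space_eq[OF sets_gw] by simp

lemma prob_gw: "prob_space V \<Longrightarrow> prob_space (gw_space V J)"
  unfolding gw_eq by (intro prob_space_PiM Mi_prob)

lemma sets_G: "sets (G j) = sets SG"
  by (rule sets_gw[OF Js])

lemma prob_G: "prob_space (G j)"
  by (rule prob_gw[OF Jp])

lemma space_G[simp]: "space (G j) = UNIV"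
  by (rule space_gw[OF Js])

lemma space_PP[simp]: "space PP = UNIV"
  by (simp add: space_PiM PiE_def extensional_def)

lemma prob_PP: "prob_space PP"
  by (intro prob_space_PiM prob_G)

lemma glue_meas:
  assumes "sets V = sets borel"
  shows "glue \<in> measurable (V \<Otimes>\<^sub>M PP) SG"
proof -
  have "(\<lambda>z u. glue z u) \<in> measurable (V \<Otimes>\<^sub>M PP) SG"
  proof (rule measurable_PiM_single')
    fix u :: "('n \<times> nat) list"
    show "(\<lambda>z. glue z u) \<in> borel_measurable (V \<Otimes>\<^sub>M PP)"
    proof (cases u)
      case Nil
      have "fst \<in> measurable (V \<Otimes>\<^sub>M PP) V" by (rule measurable_fst)
      then have "fst \<in> measurable (V \<Otimes>\<^sub>M PP) borel"
        using measurable_cong_sets[OF refl assms] by blast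
      then show ?thesis using Nil by (simp add: glue_def)
    next
      case (Cons p w)
      have "(\<lambda>z. snd z p) \<in> measurable (V \<Otimes>\<^sub>M PP) (G (fst p))"
        using measurable_compose[OF measurable_snd measurable_component_singleton[of p UNIV]] by simp
      then have "(\<lambda>z. snd z p) \<in> measurable (V \<Otimes>\<^sub>M PP) SG"
        using measurable_cong_sets[OF refl sets_G] by blast
      then have "(\<lambda>z. snd z p w) \<in> measurable (V \<Otimes>\<^sub>M PP) borel"
        using measurable_compose[OF _ root_meas[of w]] by blast
      then show ?thesis using Cons by (simp add: glue_def)
    qed
  next
    show "(\<lambda>z u. glue z u) \<in> space (V \<Otimes>\<^sub>M PP) \<rightarrow> (\<Pi>\<^sub>E u\<in>UNIV. space borel)"
      by (simp add: PiE_def extensional_def)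
  qed
  then show ?thesis by simp
qed


lemma Mi_cons: "Mi (J (fst p)) J w = Mi V J (p # w)"
  by (simp add: Mi_def)

lemma prod_split_lists:
  fixes f :: "('n \<times> nat) list \<Rightarrow> ennreal"
  assumes K: "finite K"
  shows "(\<Prod>u\<in>K. f u) = (if [] \<in> K then f [] else 1) *
     (\<Prod>p\<in>{p. \<exists>w. p # w \<in> K}. \<Prod>w\<in>{w. p # w \<in> K}. f (p # w))"
proof -
  define P where "P = {p. \<exists>w. p # w \<in> K}"
  define W where "W p = {w. p # w \<in> K}" for p
  have finP: "finite P"
    by (rule finite_subset[of _ "hd ` K"]) (auto simp: P_def K intro!: image_eqI)
  have finW: "finite (W p)" for p
    by (rule finite_subset[of _ "tl ` K"]) (auto simp: W_def K intro!: image_eqI)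
  have "(\<Prod>p\<in>P. \<Prod>w\<in>W p. f (p # w)) = (\<Prod>z\<in>Sigma P W. f (fst z # snd z))"
    using finP finW by (subst prod.Sigma) (auto simp: case_prod_beta)
  also have "\<dots> = (\<Prod>u\<in>(\<lambda>z. fst z # snd z) ` Sigma P W. f u)"
    by (subst prod.reindex) (auto simp: inj_on_def)
  also have "(\<lambda>z. fst z # snd z) ` Sigma P W = K - {[]}"
  proof (rule set_eqI)
    fix u show "u \<in> (\<lambda>z. fst z # snd z) ` Sigma P W \<longleftrightarrow> u \<in> K - {[]}"
      by (cases u) (force simp: P_def W_def image_iff)+
  qed
  finally have *: "(\<Prod>p\<in>P. \<Prod>w\<in>W p. f (p # w)) = (\<Prod>u\<in>K - {[]}. f u)" .
  show ?thesis
  proof (cases "[] \<in> K")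
    case True
    then show ?thesis using * K by (simp add: P_def W_def prod.remove)
  next
    case False
    then show ?thesis using * by (simp add: P_def W_def)
  qed
qed

lemma ball_list: "(\<forall>u\<in>K. Q u) \<longleftrightarrow> (([] \<in> K \<longrightarrow> Q []) \<and> (\<forall>p w. p # w \<in> K \<longrightarrow> Q (p # w)))"
  apply (rule iffI)
   apply blast
  apply (intro ballI)
  subgoal for u by (cases u) auto
  done

lemma GL:
  assumes Vp: "prob_space V" and Vs: "sets V = sets borel"
  shows "distr (V \<Otimes>\<^sub>M PP) (gw_space V J) glue = gw_space V J"
proof -
  interpret V: prob_space V by fact
  interpret PP: prob_space PP by (rule prob_PP)
  have spV[simp]: "space V = UNIV" using sets_eq_imp_space_eq[OF Vs] by simp
  have gwp: "prob_space (gw_space V J)" by (rule prob_gw[OF Vp])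
  show ?thesis
  proof (rule measure_eqI_PiM_infinite[symmetric, where I=UNIV and M="Mi V J"])
    show "sets (gw_space V J) = sets (PiM UNIV (Mi V J))" by (simp add: gw_eq)
    show "sets (distr (V \<Otimes>\<^sub>M PP) (gw_space V J) glue) = sets (PiM UNIV (Mi V J))" by (simp add: gw_eq)
    show "finite_measure (gw_space V J)" using gwp by (simp add: prob_space_def)
  next
    fix A K assume K: "finite K" "K \<subseteq> (UNIV :: ('n \<times> nat) list set)" and A: "\<And>i. i \<in> K \<Longrightarrow> A i \<in> sets (Mi V J i)"
    have As: "A i \<in> sets borel" if "i \<in> K" for i using A[OF that] Mi_sets[OF Vs] by simp
    define C where "C = {f. \<forall>u\<in>K. f u \<in> A u}"
    have Ceq: "prod_emb UNIV (Mi V J) K (Pi\<^sub>E K A) = C"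
      unfolding C_def by (rule cyl_eq) (rule Mi_space[OF Vs])
    define P where "P = {p. \<exists>w. p # w \<in> K}"
    define W where "W p = {w. p # w \<in> K}" for p
    have finP: "finite P"
      by (rule finite_subset[of _ "hd ` K"]) (auto simp: P_def K intro!: image_eqI)
    have finW: "finite (W p)" for p
      by (rule finite_subset[of _ "tl ` K"]) (auto simp: W_def K intro!: image_eqI)
    define A0 where "A0 = (if [] \<in> K then A [] else UNIV)"
    define E where "E p = {\<sigma>. \<forall>w\<in>W p. \<sigma> w \<in> A (p # w)}" for p
    define D where "D = {\<tau>. \<forall>p\<in>P. \<tau> p \<in> E p}"
    have A0s: "A0 \<in> sets V" using As by (simp add: A0_def Vs)
    have Es: "E p \<in> sets (G (fst p))" for p
      unfolding E_def gw_eq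
      by (rule sets_cyl) (auto simp: Mi_space Js finW Mi_sets W_def finW[unfolded W_def] intro!: As)
    have Ds: "D \<in> sets PP"
      unfolding D_def by (rule sets_cyl) (auto simp: finP Es)
    have gz: "glue z \<in> C \<longleftrightarrow> z \<in> A0 \<times> D" for z
    proof -
      obtain x \<tau> where z: "z = (x, \<tau>)" by (cases z)
      have "glue z \<in> C \<longleftrightarrow> (\<forall>u\<in>K. glue z u \<in> A u)" by (simp add: C_def)
      also have "\<dots> \<longleftrightarrow> ([] \<in> K \<longrightarrow> glue z [] \<in> A []) \<and> (\<forall>p w. p # w \<in> K \<longrightarrow> glue z (p # w) \<in> A (p # w))"
        by (rule ball_list)
      also have "\<dots> \<longleftrightarrow> z \<in> A0 \<times> D"
        by (auto simp: z glue_def A0_def D_def E_def P_def W_def)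
      finally show ?thesis .
    qed
    have pre: "glue -` C \<inter> space (V \<Otimes>\<^sub>M PP) = A0 \<times> D"
      using gz by (auto simp: space_pair_measure)
    have "emeasure (distr (V \<Otimes>\<^sub>M PP) (gw_space V J) glue) (prod_emb UNIV (Mi V J) K (Pi\<^sub>E K A))
        = emeasure (V \<Otimes>\<^sub>M PP) (A0 \<times> D)"
    proof -
      have gm: "glue \<in> measurable (V \<Otimes>\<^sub>M PP) (gw_space V J)"
        using glue_meas[OF Vs] measurable_cong_sets[OF refl sets_gw[OF Vs]] by blast
      have "C \<in> sets (gw_space V J)"
        using Ceq sets_PiM_I[of K UNIV A "Mi V J"] A K by (simp add: gw_eq)
      then show ?thesis using Ceq pre by (simp add: emeasure_distr[OF gm])
    qed
    also have "\<dots> = emeasure V A0 * emeasure PP D"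
      by (rule PP.emeasure_pair_measure_Times[OF A0s Ds])
    also have "emeasure PP D = (\<Prod>p\<in>P. emeasure (G (fst p)) (E p))"
      unfolding D_def by (rule emeasure_cyl) (auto simp: prob_G finP Es)
    also have "\<dots> = (\<Prod>p\<in>P. \<Prod>w\<in>W p. emeasure (Mi V J (p # w)) (A (p # w)))"
    proof (rule prod.cong[OF refl])
      fix p assume "p \<in> P"
      show "emeasure (G (fst p)) (E p) = (\<Prod>w\<in>W p. emeasure (Mi V J (p # w)) (A (p # w)))"
        unfolding E_def gw_eq Mi_cons[of p _ V, symmetric]
        by (rule emeasure_cyl) (auto simp: Mi_prob Jp Mi_space Js finW Mi_sets W_def finW[unfolded W_def] intro!: As)
    qed
    also have "emeasure V A0 = (if [] \<in> K then emeasure (Mi V J []) (A []) else 1)"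
      by (simp add: A0_def Mi_def V.emeasure_space_1[simplified])
    also have "(if [] \<in> K then emeasure (Mi V J []) (A []) else 1) *
        (\<Prod>p\<in>P. \<Prod>w\<in>W p. emeasure (Mi V J (p # w)) (A (p # w))) = (\<Prod>u\<in>K. emeasure (Mi V J u) (A u))"
      unfolding P_def W_def by (rule prod_split_lists[symmetric, OF K(1)])
    also have "\<dots> = emeasure (gw_space V J) (prod_emb UNIV (Mi V J) K (Pi\<^sub>E K A))"
      unfolding gw_eq using K A by (intro emeasure_PiM_emb[symmetric] Mi_prob Vp) auto
    finally show "emeasure (gw_space V J) (prod_emb UNIV (Mi V J) K (Pi\<^sub>E K A)) =
        emeasure (distr (V \<Otimes>\<^sub>M PP) (gw_space V J) glue) (prod_emb UNIV (Mi V J) K (Pi\<^sub>E K A))" by simp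
  qed
qed

lemma G_meas: "g \<in> borel_measurable SG \<Longrightarrow> g \<in> borel_measurable (G j)"
  using measurable_cong_sets[OF sets_G refl] by blast

lemma INNER:
  fixes g :: "'n \<Rightarrow> (('n \<times> nat) list \<Rightarrow> 'n sa) \<Rightarrow> ennreal" and a :: "'n \<Rightarrow> nat"
  assumes gm: "\<And>j. g j \<in> borel_measurable SG"
  shows "(\<integral>\<^sup>+\<tau>. (\<Prod>j\<in>UNIV. \<Prod>m<a j. g j (\<tau> (j, m))) \<partial>PP) = (\<Prod>j\<in>UNIV. (\<integral>\<^sup>+\<omega>. g j \<omega> \<partial>G j) ^ a j)"
proof -
  interpret PR: product_prob_space "\<lambda>p::'n \<times> nat. G (fst p)" UNIV
    by (simp add: product_prob_space_def product_sigma_finite_def product_prob_space_axioms_def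
        prob_G prob_space_imp_sigma_finite)
  define S where "S = Sigma (UNIV :: 'n set) (\<lambda>j. {..<a j})"
  have finS: "finite S" unfolding S_def by auto
  have gm': "g (fst p) \<in> borel_measurable (G (fst p))" for p by (rule G_meas[OF gm])
  have eq1: "(\<Prod>j\<in>UNIV. \<Prod>m<a j. g j (\<tau> (j, m))) = (\<Prod>p\<in>S. g (fst p) (restrict \<tau> S p))" for \<tau>
    unfolding S_def by (subst prod.Sigma) (auto simp: case_prod_beta intro!: prod.cong)
  have Fm: "(\<lambda>y. \<Prod>p\<in>S. g (fst p) (y p)) \<in> borel_measurable (PiM S (\<lambda>p. G (fst p)))"
  proof (intro borel_measurable_prod_ennreal)
    fix p assume "p \<in> S"
    show "(\<lambda>y. g (fst p) (y p)) \<in> borel_measurable (PiM S (\<lambda>p. G (fst p)))"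
      using measurable_compose[OF measurable_component_singleton[of p S "\<lambda>p. G (fst p)"] gm'[of p]] \<open>p \<in> S\<close> by simp
  qed
  have "(\<integral>\<^sup>+\<tau>. (\<Prod>j\<in>UNIV. \<Prod>m<a j. g j (\<tau> (j, m))) \<partial>PP) =
      (\<integral>\<^sup>+\<tau>. (\<lambda>y. \<Prod>p\<in>S. g (fst p) (y p)) (restrict \<tau> S) \<partial>PP)"
    by (simp only: eq1)
  also have "\<dots> = (\<integral>\<^sup>+y. (\<Prod>p\<in>S. g (fst p) (y p)) \<partial>distr PP (PiM S (\<lambda>p. G (fst p))) (\<lambda>\<tau>. restrict \<tau> S))"
  proof -
    have rm: "(\<lambda>\<tau>. restrict \<tau> S) \<in> measurable PP (PiM S (\<lambda>p. G (fst p)))"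
      by (rule measurable_restrict_subset) simp
    show ?thesis
      using Fm measurable_cong_sets[OF sets_distr[of PP "PiM S (\<lambda>p. G (fst p))" "\<lambda>\<tau>. restrict \<tau> S"] refl]
      by (intro nn_integral_distr[symmetric, OF rm]) blast
  qed
  also have "distr PP (PiM S (\<lambda>p. G (fst p))) (\<lambda>\<tau>. restrict \<tau> S) = PiM S (\<lambda>p. G (fst p))"
    by (rule PR.distr_PiM_restrict_finite[OF finS]) simp
  also have "(\<integral>\<^sup>+y. (\<Prod>p\<in>S. g (fst p) (y p)) \<partial>PiM S (\<lambda>p. G (fst p))) = (\<Prod>p\<in>S. \<integral>\<^sup>+\<omega>. g (fst p) \<omega> \<partial>G (fst p))"
    by (rule PR.product_nn_integral_prod[OF finS gm'])
  also have "\<dots> = (\<Prod>j\<in>UNIV. \<Prod>m<a j. (\<integral>\<^sup>+\<omega>. g j \<omega> \<partial>G j))"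
    unfolding S_def by (subst prod.Sigma) (auto simp: case_prod_beta)
  also have "\<dots> = (\<Prod>j\<in>UNIV. (\<integral>\<^sup>+\<omega>. g j \<omega> \<partial>G j) ^ a j)"
    by simp
  finally show ?thesis .
qed

lemma F_meas:
  fixes h :: "'n sa \<Rightarrow> ennreal" and g :: "'n \<Rightarrow> (('n \<times> nat) list \<Rightarrow> 'n sa) \<Rightarrow> ennreal"
  assumes hm: "h \<in> borel_measurable borel" and gm: "\<And>j. g j \<in> borel_measurable SG"
  shows "(\<lambda>\<omega>. h (\<omega> []) * (\<Prod>j\<in>UNIV. \<Prod>m<snd (\<omega> []) j. g j (sh (j, m) \<omega>))) \<in> borel_measurable SG"
proof -
  have A: "(\<lambda>\<omega>. h (\<omega> []) * (\<Prod>j\<in>UNIV. \<Prod>m<a j. g j (sh (j, m) \<omega>))) \<in> borel_measurable SG" for a :: "'n \<Rightarrow> nat"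
    by (intro borel_measurable_times_ennreal borel_measurable_prod_ennreal
        measurable_compose[OF root_meas hm] measurable_compose[OF sh_meas gm])
  have B: "(\<lambda>\<omega>::('n \<times> nat) list \<Rightarrow> 'n sa. snd (\<omega> [])) \<in> measurable SG (count_space UNIV)"
    by (rule measurable_compose[OF root_meas snd_meas])
  show ?thesis by (rule measurable_compose_countable[OF A B])
qed

lemma DL:
  fixes h :: "'n sa \<Rightarrow> ennreal" and g :: "'n \<Rightarrow> (('n \<times> nat) list \<Rightarrow> 'n sa) \<Rightarrow> ennreal"
  assumes Vp: "prob_space V" and Vs: "sets V = sets borel"
    and hm: "h \<in> borel_measurable borel" and gm: "\<And>j. g j \<in> borel_measurable SG"
  shows "(\<integral>\<^sup>+\<omega>. h (\<omega> []) * (\<Prod>j\<in>UNIV. \<Prod>m<snd (\<omega> []) j. g j (sh (j, m) \<omega>)) \<partial>gw_space V J)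
       = (\<integral>\<^sup>+x. h x * (\<Prod>j\<in>UNIV. (\<integral>\<^sup>+\<omega>. g j \<omega> \<partial>G j) ^ snd x j) \<partial>V)"
proof -
  interpret PP: prob_space PP by (rule prob_PP)
  define F where "F \<omega> = h (\<omega> []) * (\<Prod>j\<in>UNIV. \<Prod>m<snd (\<omega> []) j. g j (sh (j, m) \<omega>))" for \<omega>
  have Fm: "F \<in> borel_measurable SG" unfolding F_def by (rule F_meas[OF hm gm])
  have Fm': "F \<in> borel_measurable (gw_space V J)"
    using Fm measurable_cong_sets[OF sets_gw[OF Vs] refl] by blast
  have gm': "glue \<in> measurable (V \<Otimes>\<^sub>M PP) (gw_space V J)"
    using glue_meas[OF Vs] measurable_cong_sets[OF refl sets_gw[OF Vs]] by blast
  have FG: "(\<lambda>z. F (glue z)) \<in> borel_measurable (V \<Otimes>\<^sub>M PP)"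
    by (rule measurable_compose[OF gm' Fm'])
  have "(\<integral>\<^sup>+\<omega>. F \<omega> \<partial>gw_space V J) = (\<integral>\<^sup>+\<omega>. F \<omega> \<partial>distr (V \<Otimes>\<^sub>M PP) (gw_space V J) glue)"
    by (simp add: GL[OF Vp Vs])
  also have "\<dots> = (\<integral>\<^sup>+z. F (glue z) \<partial>(V \<Otimes>\<^sub>M PP))"
    using Fm' measurable_cong_sets[OF sets_distr[of "V \<Otimes>\<^sub>M PP" "gw_space V J" glue] refl]
    by (intro nn_integral_distr[OF gm']) blast
  also have "\<dots> = (\<integral>\<^sup>+x. \<integral>\<^sup>+\<tau>. F (glue (x, \<tau>)) \<partial>PP \<partial>V)"
    by (rule PP.nn_integral_fst[symmetric, OF FG])
  also have "\<dots> = (\<integral>\<^sup>+x. h x * (\<Prod>j\<in>UNIV. (\<integral>\<^sup>+\<omega>. g j \<omega> \<partial>G j) ^ snd x j) \<partial>V)"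
  proof (rule nn_integral_cong)
    fix x
    have "(\<integral>\<^sup>+\<tau>. F (glue (x, \<tau>)) \<partial>PP) = (\<integral>\<^sup>+\<tau>. h x * (\<Prod>j\<in>UNIV. \<Prod>m<snd x j. g j (\<tau> (j, m))) \<partial>PP)"
      by (simp add: F_def)
    also have "\<dots> = h x * (\<integral>\<^sup>+\<tau>. (\<Prod>j\<in>UNIV. \<Prod>m<snd x j. g j (\<tau> (j, m))) \<partial>PP)"
    proof (rule nn_integral_cmult, intro borel_measurable_prod_ennreal)
      fix j m
      show "(\<lambda>\<tau>. g j (\<tau> (j, m))) \<in> borel_measurable PP"
        using measurable_compose[OF measurable_component_singleton[of "(j, m)" UNIV "\<lambda>p. G (fst p)", simplified] G_meas[OF gm, of j j]] by simp
    qed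
    also have "\<dots> = h x * (\<Prod>j\<in>UNIV. (\<integral>\<^sup>+\<omega>. g j \<omega> \<partial>G j) ^ snd x j)"
      by (simp add: INNER[OF gm])
    finally show "(\<integral>\<^sup>+\<tau>. F (glue (x, \<tau>)) \<partial>PP) = h x * (\<Prod>j\<in>UNIV. (\<integral>\<^sup>+\<omega>. g j \<omega> \<partial>G j) ^ snd x j)" .
  qed
  finally show ?thesis by (simp add: F_def)
qed
end

lemma lt_ennreal: "lt_enn \<theta> (ennreal r) = exp (- \<theta> * max 0 r)"
  by (cases "0 \<le> r") (auto simp: lt_enn_def max_def ennreal_neg)

lemma lt_zero[simp]: "lt_enn \<theta> 0 = 1"
  by (simp add: lt_enn_def)

lemma lt_add: "lt_enn \<theta> (a + b) = lt_enn \<theta> a * lt_enn \<theta> b"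
proof (cases "a = \<top> \<or> b = \<top>")
  case True then show ?thesis by (auto simp: lt_enn_def)
next
  case False
  then obtain r s where r: "a = ennreal r" "0 \<le> r" and s: "b = ennreal s" "0 \<le> s"
    by (metis ennreal_cases)
  have e: "exp (- \<theta> * (r + s)) = exp (- \<theta> * r) * exp (- \<theta> * s)"
    by (simp add: exp_add[symmetric] algebra_simps)
  show ?thesis using r s e
    by (simp add: lt_enn_def ennreal_plus[symmetric] del: ennreal_plus)
qed

lemma lt_sum: "finite S \<Longrightarrow> lt_enn \<theta> (\<Sum>i\<in>S. x i) = (\<Prod>i\<in>S. lt_enn \<theta> (x i))"
  by (induction S rule: finite_induct) (auto simp: lt_add)

lemma lt_nonneg: "0 \<le> lt_enn \<theta> x"
  by (simp add: lt_enn_def)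

lemma lt_le1: "0 \<le> \<theta> \<Longrightarrow> lt_enn \<theta> x \<le> 1"
  by (simp add: lt_enn_def)

lemma lt_meas[measurable]: "lt_enn \<theta> \<in> borel_measurable borel"
  unfolding lt_enn_def by measurable

lemma gw_node_Nil[simp]: "gw_node \<omega> []"
  by (simp add: gw_node_def)

lemma gw_node_Cons: "gw_node \<omega> (p # w) \<longleftrightarrow> snd p < snd (\<omega> []) (fst p) \<and> gw_node (sh p \<omega>) w"
  unfolding gw_node_def sh_def
  by (simp add: All_less_Suc2)


lemma node_pred: "(\<lambda>\<omega>::('n::finite \<times> nat) list \<Rightarrow> 'n sa. gw_node \<omega> u) \<in> measurable SG (count_space UNIV)"
proof -
  have sv: "(\<lambda>\<omega>::('n::finite \<times> nat) list \<Rightarrow> 'n sa. snd (\<omega> v)) \<in> measurable SG (count_space UNIV)" for v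
    by (rule measurable_compose[OF root_meas snd_meas])
  have P: "(\<lambda>\<omega>::('n \<times> nat) list \<Rightarrow> 'n sa. c < snd (\<omega> v) i) \<in> measurable SG (count_space UNIV)" for c v i
    using measurable_compose[OF sv[of v] measurable_count_space[of "\<lambda>a. c < a i" UNIV]] .
  have "(\<lambda>\<omega>::('n \<times> nat) list \<Rightarrow> 'n sa. \<forall>m\<in>{..<length u}. snd (u ! m) < snd (\<omega> (take m u)) (fst (u ! m))) \<in> measurable SG (count_space UNIV)"
    by (intro pred_intros_finite P) auto
  moreover have "(\<lambda>\<omega>::('n \<times> nat) list \<Rightarrow> 'n sa. gw_node \<omega> u) = (\<lambda>\<omega>. \<forall>m\<in>{..<length u}. snd (u ! m) < snd (\<omega> (take m u)) (fst (u ! m)))"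
    by (rule ext) (auto simp: gw_node_def)
  ultimately show ?thesis by (simp only:)
qed

lemma node_val_meas: "(\<lambda>\<omega>::('n::finite \<times> nat) list \<Rightarrow> 'n sa. if gw_node \<omega> u then ennreal (fst (\<omega> u)) else 0) \<in> borel_measurable SG"
proof (rule measurable_If)
  show "(\<lambda>\<omega>::('n::finite \<times> nat) list \<Rightarrow> 'n sa. ennreal (fst (\<omega> u))) \<in> borel_measurable SG"
    by (rule measurable_compose[OF measurable_compose[OF root_meas fst_meas] measurable_ennreal])
  show "{\<omega> \<in> space SG. gw_node \<omega> u} \<in> sets SG"
    using node_pred[where u=u] by (simp add: pred_def)
qed simp

lemma busy_meas: "busy \<in> borel_measurable (SG :: (('n::finite \<times> nat) list \<Rightarrow> 'n sa) measure)"
proof -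
  define e where "e = from_nat_into (UNIV :: ('n \<times> nat) list set)"
  have bij: "bij_betw e UNIV UNIV"
    unfolding e_def by (rule bij_betw_from_nat_into) (auto simp: infinite_UNIV_listI)
  have "busy \<omega> = (\<Sum>n. (if gw_node \<omega> (e n) then ennreal (fst (\<omega> (e n))) else 0))" for \<omega> :: "('n \<times> nat) list \<Rightarrow> 'n sa"
    unfolding busy_def
    using nn_integral_bij_count_space[OF bij, of "\<lambda>u. if gw_node \<omega> u then ennreal (fst (\<omega> u)) else 0"]
    by (simp add: nn_integral_count_space_nat)
  then have eq: "busy = (\<lambda>\<omega>::('n \<times> nat) list \<Rightarrow> 'n sa. (\<Sum>n. (if gw_node \<omega> (e n) then ennreal (fst (\<omega> (e n))) else 0)))"
    by (simp add: fun_eq_iff)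
  show ?thesis unfolding eq
    by (intro borel_measurable_suminf_order node_val_meas)
qed

lemma busy_rec:
  fixes \<omega> :: "('n::finite \<times> nat) list \<Rightarrow> 'n sa"
  shows "busy \<omega> = ennreal (fst (\<omega> [])) + (\<Sum>j\<in>UNIV. \<Sum>m<snd (\<omega> []) j. busy (sh (j, m) \<omega>))"
proof -
  define f where "f u = (if gw_node \<omega> u then ennreal (fst (\<omega> u)) else 0)" for u
  define A where "A = snd (\<omega> [])"
  have "busy \<omega> = (\<integral>\<^sup>+u. f u \<partial>count_space UNIV)" by (simp add: busy_def f_def)
  also have "\<dots> = (\<integral>\<^sup>+u. f u * indicator {[]} u \<partial>count_space UNIV) + (\<integral>\<^sup>+u. f u * indicator (UNIV - {[]}) u \<partial>count_space UNIV)"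
    by (subst nn_integral_add[symmetric]) (auto intro!: nn_integral_cong split: split_indicator)
  also have "(\<integral>\<^sup>+u. f u * indicator {[]} u \<partial>count_space UNIV) = ennreal (fst (\<omega> []))"
    by (simp add: nn_integral_count_space_indicator[symmetric] nn_integral_count_space_finite f_def)
  also have "(\<integral>\<^sup>+u. f u * indicator (UNIV - {[]}) u \<partial>count_space UNIV) = (\<integral>\<^sup>+u. f u \<partial>count_space (UNIV - {[]}))"
    by (simp add: nn_integral_count_space_indicator)
  also have "\<dots> = (\<integral>\<^sup>+z. f (fst z # snd z) \<partial>count_space UNIV)"
  proof (rule nn_integral_bij_count_space[symmetric])
    show "bij_betw (\<lambda>z::('n \<times> nat) \<times> ('n \<times> nat) list. fst z # snd z) UNIV (UNIV - {[]})"
      by (rule bij_betwI[where g="\<lambda>u. (hd u, tl u)"]) auto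
  qed
  also have "\<dots> = (\<integral>\<^sup>+z. f (fst z # snd z) \<partial>(count_space UNIV \<Otimes>\<^sub>M count_space UNIV))"
    by (simp add: pair_measure_countable)
  also have "\<dots> = (\<integral>\<^sup>+p. \<integral>\<^sup>+w. f (p # w) \<partial>count_space UNIV \<partial>count_space UNIV)"
  proof -
    interpret C: sigma_finite_measure "count_space (UNIV :: ('n \<times> nat) list set)"
      by (rule sigma_finite_measure_count_space_countable) simp
    show ?thesis
      by (subst C.nn_integral_fst[symmetric]) (simp_all add: pair_measure_countable)
  qed
  also have "\<dots> = (\<integral>\<^sup>+p. (if snd p < A (fst p) then busy (sh p \<omega>) else 0) \<partial>count_space UNIV)"
    by (rule nn_integral_cong) (simp add: f_def gw_node_Cons busy_def A_def sh_def)
  also have "\<dots> = (\<Sum>p\<in>Sigma UNIV (\<lambda>j. {..<A j}). (if snd p < A (fst p) then busy (sh p \<omega>) else 0))"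
    by (rule nn_integral_count_space') auto
  also have "\<dots> = (\<Sum>p\<in>Sigma UNIV (\<lambda>j. {..<A j}). busy (sh p \<omega>))"
    by (rule sum.cong) auto
  also have "\<dots> = (\<Sum>j\<in>UNIV. \<Sum>m<A j. busy (sh (j, m) \<omega>))"
    by (subst sum.Sigma) auto
  finally show ?thesis by (simp add: A_def)
qed

lemma lt_rec:
  fixes \<omega> :: "('n::finite \<times> nat) list \<Rightarrow> 'n sa"
  shows "lt_enn \<theta> (busy \<omega>) = exp (- \<theta> * max 0 (fst (\<omega> []))) * (\<Prod>j\<in>UNIV. \<Prod>m<snd (\<omega> []) j. lt_enn \<theta> (busy (sh (j, m) \<omega>)))"
proof -
  have "lt_enn \<theta> (\<Sum>j\<in>UNIV. \<Sum>m<snd (\<omega> []) j. busy (sh (j, m) \<omega>)) = (\<Prod>j\<in>UNIV. lt_enn \<theta> (\<Sum>m<snd (\<omega> []) j. busy (sh (j, m) \<omega>)))"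
    by (rule lt_sum) simp
  also have "\<dots> = (\<Prod>j\<in>UNIV. \<Prod>m<snd (\<omega> []) j. lt_enn \<theta> (busy (sh (j, m) \<omega>)))"
    by (intro prod.cong refl lt_sum) simp
  finally show ?thesis by (subst busy_rec) (simp only: lt_add lt_ennreal)
qed

fun tr :: "('n sa \<Rightarrow> real) \<Rightarrow> ('n \<Rightarrow> real) \<Rightarrow> nat \<Rightarrow> 'n \<Rightarrow> (('n \<times> nat) list \<Rightarrow> 'n sa) \<Rightarrow> real" where
  "tr w s 0 c \<omega> = s c"
| "tr w s (Suc k) c \<omega> = w (\<omega> []) * (\<Prod>j\<in>UNIV. \<Prod>m<snd (\<omega> []) j. tr w s k j (sh (j, m) \<omega>))"

fun ht :: "nat \<Rightarrow> (('n \<times> nat) list \<Rightarrow> 'n sa) \<Rightarrow> bool" where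
  "ht 0 \<omega> = False"
| "ht (Suc k) \<omega> = (\<forall>j. \<forall>m<snd (\<omega> []) j. ht k (sh (j, m) \<omega>))"

lemma ht_mono: "ht k \<omega> \<Longrightarrow> ht (Suc k) \<omega>"
  by (induction k arbitrary: \<omega>) auto

lemma ht_mono': "k \<le> l \<Longrightarrow> ht k \<omega> \<Longrightarrow> ht l \<omega>"
  by (induction l rule: dec_induct) (auto simp del: ht.simps intro: ht_mono)

lemma sv_meas: "(\<lambda>\<omega>::('n::finite \<times> nat) list \<Rightarrow> 'n sa. snd (\<omega> [])) \<in> measurable SG (count_space UNIV)"
  by (rule measurable_compose[OF root_meas snd_meas])

lemma ht_meas: "(\<lambda>\<omega>::('n::finite \<times> nat) list \<Rightarrow> 'n sa. ht k \<omega>) \<in> measurable SG (count_space UNIV)"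
proof (induction k)
  case 0 then show ?case by simp
next
  case (Suc k)
  have A: "(\<lambda>\<omega>::('n \<times> nat) list \<Rightarrow> 'n sa. \<forall>j. \<forall>m<a j. ht k (sh (j, m) \<omega>)) \<in> measurable SG (count_space UNIV)" for a :: "'n \<Rightarrow> nat"
  proof -
    have "(\<lambda>\<omega>::('n \<times> nat) list \<Rightarrow> 'n sa. \<forall>j\<in>UNIV. \<forall>m\<in>{..<a j}. ht k (sh (j, m) \<omega>)) \<in> measurable SG (count_space UNIV)"
      by (intro pred_intros_finite measurable_compose[OF sh_meas Suc.IH]) auto
    moreover have "(\<lambda>\<omega>::('n \<times> nat) list \<Rightarrow> 'n sa. \<forall>j\<in>UNIV. \<forall>m\<in>{..<a j}. ht k (sh (j, m) \<omega>))
       = (\<lambda>\<omega>. \<forall>j. \<forall>m<a j. ht k (sh (j, m) \<omega>))" by (rule ext) auto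
    ultimately show ?thesis by (simp only:)
  qed
  have "(\<lambda>\<omega>::('n \<times> nat) list \<Rightarrow> 'n sa. ht (Suc k) \<omega>) = (\<lambda>\<omega>. (\<lambda>a \<omega>. \<forall>j. \<forall>m<a j. ht k (sh (j, m) \<omega>)) (snd (\<omega> [])) \<omega>)"
    by (rule ext) simp
  then show ?case using measurable_compose_countable[OF A sv_meas] by (simp only:)
qed

lemma tr_meas:
  assumes wm: "w \<in> borel_measurable borel"
  shows "(\<lambda>\<omega>::('n::finite \<times> nat) list \<Rightarrow> 'n sa. tr w s k c \<omega>) \<in> borel_measurable SG"
proof (induction k arbitrary: c)
  case 0 then show ?case by simp
next
  case (Suc k)
  have A: "(\<lambda>\<omega>::('n \<times> nat) list \<Rightarrow> 'n sa. w (\<omega> []) * (\<Prod>j\<in>UNIV. \<Prod>m<a j. tr w s k j (sh (j, m) \<omega>))) \<in> borel_measurable SG" for a :: "'n \<Rightarrow> nat"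
    by (intro borel_measurable_times borel_measurable_prod measurable_compose[OF root_meas wm]
        measurable_compose[OF sh_meas Suc.IH])
  have "(\<lambda>\<omega>::('n \<times> nat) list \<Rightarrow> 'n sa. tr w s (Suc k) c \<omega>) = (\<lambda>\<omega>. (\<lambda>a \<omega>. w (\<omega> []) * (\<Prod>j\<in>UNIV. \<Prod>m<a j. tr w s k j (sh (j, m) \<omega>))) (snd (\<omega> [])) \<omega>)"
    by (rule ext) simp
  then show ?case using measurable_compose_countable[OF A sv_meas] by (simp only:)
qed

lemma tr_range:
  assumes "\<And>x. 0 \<le> w x" "\<And>x. w x \<le> 1" "\<And>j. 0 \<le> s j" "\<And>j. s j \<le> 1"
  shows "0 \<le> tr w s k c \<omega> \<and> tr w s k c \<omega> \<le> 1"
proof (induction k arbitrary: c \<omega>)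
  case 0 then show ?case using assms by simp
next
  case (Suc k)
  have "0 \<le> (\<Prod>j\<in>UNIV. \<Prod>m<snd (\<omega> []) j. tr w s k j (sh (j, m) \<omega>))"
    using Suc by (intro prod_nonneg) auto
  moreover have "(\<Prod>j\<in>UNIV. \<Prod>m<snd (\<omega> []) j. tr w s k j (sh (j, m) \<omega>)) \<le> 1"
    using Suc by (intro prod_le_1 prod_nonneg conjI) auto
  ultimately show ?case using assms(1)[of "\<omega> []"] assms(2)[of "\<omega> []"] by (auto intro: mult_le_one)
qed

lemma lt_busy_meas: "(\<lambda>\<omega>::('n::finite \<times> nat) list \<Rightarrow> 'n sa. lt_enn \<theta> (busy \<omega>)) \<in> borel_measurable SG"
  by (rule measurable_compose[OF busy_meas lt_meas])

lemma ennreal_prod2: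
  assumes "\<And>j m. 0 \<le> f j m"
  shows "ennreal (\<Prod>j\<in>A. \<Prod>m\<in>B j. f j m) = (\<Prod>j\<in>A. \<Prod>m\<in>B j. ennreal (f j m))"
  using assms by (simp add: prod_ennreal prod_nonneg)

context gwJ
begin

lemma tr_rec_int:
  assumes wm: "w \<in> borel_measurable borel" and w0: "\<And>x. 0 \<le> w x" and t0: "\<And>k c \<omega>. 0 \<le> tr w s k c \<omega>"
  shows "(\<integral>\<^sup>+\<omega>. ennreal (tr w s (Suc k) i \<omega>) \<partial>G i)
     = (\<integral>\<^sup>+x. ennreal (w x) * (\<Prod>j\<in>UNIV. (\<integral>\<^sup>+\<omega>. ennreal (tr w s k j \<omega>) \<partial>G j) ^ snd x j) \<partial>J i)"
proof -
  have "(\<integral>\<^sup>+\<omega>. ennreal (tr w s (Suc k) i \<omega>) \<partial>G i) =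
     (\<integral>\<^sup>+\<omega>. ennreal (w (\<omega> [])) * (\<Prod>j\<in>UNIV. \<Prod>m<snd (\<omega> []) j. ennreal (tr w s k j (sh (j, m) \<omega>))) \<partial>G i)"
    by (intro nn_integral_cong) (simp add: ennreal_mult w0 prod_nonneg t0 ennreal_prod2)
  also have "\<dots> = (\<integral>\<^sup>+x. ennreal (w x) * (\<Prod>j\<in>UNIV. (\<integral>\<^sup>+\<omega>. ennreal (tr w s k j \<omega>) \<partial>G j) ^ snd x j) \<partial>J i)"
    by (rule DL[OF Jp Js measurable_compose[OF wm measurable_ennreal] measurable_compose[OF tr_meas[OF wm] measurable_ennreal]])
  finally show ?thesis .
qed

lemma bt_nn:
  assumes th: "0 \<le> \<theta>" and Vp: "prob_space V" and Vs: "sets V = sets borel"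
  shows "ennreal (busy_transform V J \<theta>) = (\<integral>\<^sup>+\<omega>. ennreal (lt_enn \<theta> (busy \<omega>)) \<partial>gw_space V J)"
proof -
  interpret P: prob_space "gw_space V J" by (rule prob_gw[OF Vp])
  have m: "(\<lambda>\<omega>. lt_enn \<theta> (busy \<omega>)) \<in> borel_measurable (gw_space V J)"
    using lt_busy_meas measurable_cong_sets[OF sets_gw[OF Vs] refl] by blast
  have "integrable (gw_space V J) (\<lambda>\<omega>. lt_enn \<theta> (busy \<omega>))"
    by (rule P.integrable_const_bound[where B=1, OF AE_I2 m]) (simp add: lt_nonneg lt_le1[OF th])
  then show ?thesis unfolding busy_transform_def
    by (subst nn_integral_eq_integral) (auto simp: lt_nonneg)
qed

lemma partA:
  assumes th: "0 \<le> \<theta>" and Vp: "prob_space V" and Vs: "sets V = sets borel"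
    and Vpos: "AE x in V. 0 \<le> fst x"
    and b: "\<And>j. b j = busy_transform (J j) J \<theta>"
  shows "ennreal (busy_transform V J \<theta>) = sa_transform V \<theta> b"
proof -
  have b0: "0 \<le> b j" for j
    unfolding b busy_transform_def by (rule integral_nonneg_AE) (simp add: lt_nonneg)
  have "ennreal (busy_transform V J \<theta>) = (\<integral>\<^sup>+\<omega>. ennreal (lt_enn \<theta> (busy \<omega>)) \<partial>gw_space V J)"
    by (rule bt_nn[OF th Vp Vs])
  also have "\<dots> = (\<integral>\<^sup>+\<omega>. ennreal (exp (- \<theta> * max 0 (fst (\<omega> [])))) *
      (\<Prod>j\<in>UNIV. \<Prod>m<snd (\<omega> []) j. ennreal (lt_enn \<theta> (busy (sh (j, m) \<omega>)))) \<partial>gw_space V J)"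
  proof (rule nn_integral_cong)
    fix \<omega> :: "('n \<times> nat) list \<Rightarrow> 'n sa"
    have "lt_enn \<theta> (busy \<omega>) = exp (- \<theta> * max 0 (fst (\<omega> []))) * (\<Prod>j\<in>UNIV. \<Prod>m<snd (\<omega> []) j. lt_enn \<theta> (busy (sh (j, m) \<omega>)))"
      by (rule lt_rec)
    then show "ennreal (lt_enn \<theta> (busy \<omega>)) = ennreal (exp (- \<theta> * max 0 (fst (\<omega> [])))) *
      (\<Prod>j\<in>UNIV. \<Prod>m<snd (\<omega> []) j. ennreal (lt_enn \<theta> (busy (sh (j, m) \<omega>))))"
      by (simp add: ennreal_mult prod_nonneg lt_nonneg ennreal_prod2)
  qed
  also have "\<dots> = (\<integral>\<^sup>+x. ennreal (exp (- \<theta> * max 0 (fst x))) *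
      (\<Prod>j\<in>UNIV. (\<integral>\<^sup>+\<omega>. ennreal (lt_enn \<theta> (busy \<omega>)) \<partial>G j) ^ snd x j) \<partial>V)"
  proof (rule DL[OF Vp Vs])
    show "(\<lambda>x. ennreal (exp (- \<theta> * max 0 (fst x)))) \<in> borel_measurable (borel :: 'n sa measure)"
      by (intro measurable_compose[OF fst_meas] measurable_compose[OF _ measurable_ennreal] borel_measurable_continuous_onI continuous_intros)
    show "(\<lambda>\<omega>. ennreal (lt_enn \<theta> (busy \<omega>))) \<in> borel_measurable SG" for j :: 'n
      by (rule measurable_compose[OF lt_busy_meas measurable_ennreal])
  qed
  also have "\<dots> = (\<integral>\<^sup>+x. ennreal (exp (- \<theta> * fst x) * (\<Prod>j\<in>UNIV. b j ^ snd x j)) \<partial>V)"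
  proof (rule nn_integral_cong_AE)
    show "AE x in V. ennreal (exp (- \<theta> * max 0 (fst x))) *
      (\<Prod>j\<in>UNIV. (\<integral>\<^sup>+\<omega>. ennreal (lt_enn \<theta> (busy \<omega>)) \<partial>G j) ^ snd x j) =
      ennreal (exp (- \<theta> * fst x) * (\<Prod>j\<in>UNIV. b j ^ snd x j))"
      using Vpos
    proof eventually_elim
      case (elim x)
      have "(\<integral>\<^sup>+\<omega>. ennreal (lt_enn \<theta> (busy \<omega>)) \<partial>G j) = ennreal (b j)" for j
        using bt_nn[OF th Jp Js, of j] b[of j] by simp
      then show ?case using elim
        by (simp add: ennreal_mult prod_nonneg b0 prod_ennreal ennreal_power max_def)
    qed
  qed
  also have "\<dots> = sa_transform V \<theta> b"
    by (simp add: sa_transform_def)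
  finally show ?thesis .
qed

end

lemma tr_zero_eq:
  fixes \<omega> :: "('n::finite \<times> nat) list \<Rightarrow> 'n sa"
  shows "tr w (\<lambda>_. 0) k c \<omega> = (if ht k \<omega> then tr w (\<lambda>_. 1) k c \<omega> else 0)"
proof (induction k arbitrary: c \<omega>)
  case 0 then show ?case by simp
next
  case (Suc k)
  show ?case
  proof (cases "ht (Suc k) \<omega>")
    case True
    then have "\<forall>j. \<forall>m<snd (\<omega> []) j. ht k (sh (j, m) \<omega>)" by simp
    then show ?thesis using True by (simp add: Suc.IH)
  next
    case False
    then obtain j m where jm: "m < snd (\<omega> []) j" "\<not> ht k (sh (j, m) \<omega>)" by auto
    have "(\<Prod>m<snd (\<omega> []) j. tr w (\<lambda>_. 0) k j (sh (j, m) \<omega>)) = 0"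
      using jm by (intro prod_zero) (auto simp: Suc.IH intro!: bexI[of _ m])
    then have "(\<Prod>j\<in>UNIV. \<Prod>m<snd (\<omega> []) j. tr w (\<lambda>_. 0) k j (sh (j, m) \<omega>)) = 0"
      by (intro prod_zero) auto
    then show ?thesis using False by (simp only: tr.simps) simp
  qed
qed

lemma L_eq:
  fixes \<omega> :: "('n::finite \<times> nat) list \<Rightarrow> 'n sa"
  assumes w0: "\<And>x. w x = exp (- \<theta> * max 0 (fst x))"
  shows "tr w (\<lambda>_. 0) k c \<omega> = (if ht k \<omega> then lt_enn \<theta> (busy \<omega>) else 0)"
proof (induction k arbitrary: c \<omega>)
  case 0 then show ?case by simp
next
  case (Suc k)
  show ?case
  proof (cases "ht (Suc k) \<omega>")
    case True
    then have H: "\<forall>j. \<forall>m<snd (\<omega> []) j. ht k (sh (j, m) \<omega>)" by simp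
    have "(\<Prod>j\<in>UNIV. \<Prod>m<snd (\<omega> []) j. tr w (\<lambda>_. 0) k j (sh (j, m) \<omega>))
       = (\<Prod>j\<in>UNIV. \<Prod>m<snd (\<omega> []) j. lt_enn \<theta> (busy (sh (j, m) \<omega>)))"
      using H by (intro prod.cong refl) (simp add: Suc.IH)
    then show ?thesis using True lt_rec[of \<theta> \<omega>] w0[of "\<omega> []"] by (simp only: tr.simps) simp
  next
    case False
    then obtain j m where jm: "m < snd (\<omega> []) j" "\<not> ht k (sh (j, m) \<omega>)" by auto
    have "(\<Prod>m<snd (\<omega> []) j. tr w (\<lambda>_. 0) k j (sh (j, m) \<omega>)) = 0"
      using jm by (intro prod_zero) (auto simp: Suc.IH intro!: bexI[of _ m])
    then have "(\<Prod>j\<in>UNIV. \<Prod>m<snd (\<omega> []) j. tr w (\<lambda>_. 0) k j (sh (j, m) \<omega>)) = 0"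
      by (intro prod_zero) auto
    then show ?thesis using False by (simp only: tr.simps) simp
  qed
qed

lemma lt_le_tr:
  fixes \<omega> :: "('n::finite \<times> nat) list \<Rightarrow> 'n sa"
  assumes k0: "0 \<le> \<kappa>" and vge: "\<And>x. exp (- \<kappa> * max 0 (fst x)) \<le> v x"
  shows "lt_enn \<kappa> (busy \<omega>) \<le> tr v (\<lambda>_. 1) k c \<omega>"
proof (induction k arbitrary: c \<omega>)
  case 0 then show ?case by (simp add: lt_le1[OF k0])
next
  case (Suc k)
  have v0: "0 \<le> v x" for x using vge[of x] by (meson exp_ge_zero order.trans)
  have "lt_enn \<kappa> (busy \<omega>) = exp (- \<kappa> * max 0 (fst (\<omega> []))) * (\<Prod>j\<in>UNIV. \<Prod>m<snd (\<omega> []) j. lt_enn \<kappa> (busy (sh (j, m) \<omega>)))"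
    by (rule lt_rec)
  also have "\<dots> \<le> v (\<omega> []) * (\<Prod>j\<in>UNIV. \<Prod>m<snd (\<omega> []) j. tr v (\<lambda>_. 1) k j (sh (j, m) \<omega>))"
    by (intro mult_mono vge prod_mono conjI prod_nonneg lt_nonneg Suc.IH) (auto intro: order.trans[OF lt_nonneg Suc.IH] v0)
  finally show ?case by simp
qed

lemma prod_half_le:
  fixes x :: "'a \<Rightarrow> real"
  assumes "finite S" "S \<noteq> {}" "\<And>i. i \<in> S \<Longrightarrow> 0 \<le> x i \<and> x i \<le> 1/2"
  shows "(\<Prod>i\<in>S. x i) \<le> 1/2"
proof -
  obtain a where a: "a \<in> S" using assms(2) by auto
  have x1: "x i \<le> 1" if "i \<in> S" for i using assms(3)[OF that] by linarith
  have "(\<Prod>i\<in>S. x i) = x a * (\<Prod>i\<in>S - {a}. x i)" using a assms(1) by (simp add: prod.remove)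
  also have "\<dots> \<le> 1/2 * 1"
    using assms(3) a x1 by (intro mult_mono prod_le_1 prod_nonneg) auto
  finally show ?thesis by simp
qed

lemma PL:
  fixes x y :: "'a \<Rightarrow> real"
  assumes "finite S" "0 \<le> d" "\<And>i. i \<in> S \<Longrightarrow> 0 \<le> y i \<and> y i \<le> x i \<and> x i \<le> y i + d \<and> x i \<le> 1/2"
  shows "(\<Prod>i\<in>S. x i) \<le> (\<Prod>i\<in>S. y i) + d"
  using assms(1,3)
proof (induction S rule: finite_induct)
  case empty then show ?case using assms(2) by simp
next
  case (insert a F)
  have xa: "0 \<le> y a" "y a \<le> x a" "x a \<le> y a + d" "x a \<le> 1/2" using insert.prems by auto
  have IH: "(\<Prod>i\<in>F. x i) \<le> (\<Prod>i\<in>F. y i) + d" using insert.IH insert.prems by auto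
  have Y0: "0 \<le> (\<Prod>i\<in>F. y i)" using insert.prems by (intro prod_nonneg) auto
  have YX: "(\<Prod>i\<in>F. y i) \<le> (\<Prod>i\<in>F. x i)" using insert.prems by (intro prod_mono) auto
  have "(\<Prod>i\<in>insert a F. x i) = x a * (\<Prod>i\<in>F. x i)" using insert by simp
  also have "\<dots> \<le> (\<Prod>i\<in>insert a F. y i) + d"
  proof (cases "F = {}")
    case True then show ?thesis using xa insert by simp
  next
    case False
    have X2: "(\<Prod>i\<in>F. x i) \<le> 1/2" using False insert.prems insert.hyps
      by (intro prod_half_le) (auto intro: order.trans[of _ "y i" "x i" for i])
    have "x a * (\<Prod>i\<in>F. x i) = x a * ((\<Prod>i\<in>F. x i) - (\<Prod>i\<in>F. y i)) + (x a - y a) * (\<Prod>i\<in>F. y i) + y a * (\<Prod>i\<in>F. y i)"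
      by (simp add: algebra_simps)
    also have "\<dots> \<le> (1/2) * d + d * (1/2) + y a * (\<Prod>i\<in>F. y i)"
      using xa IH Y0 YX X2 by (intro add_mono mult_mono) auto
    finally show ?thesis using insert by simp
  qed
  finally show ?case .
qed

lemma inv_suc_mono: "n \<le> m \<Longrightarrow> 1 / real (Suc m) \<le> 1 / real (Suc n)"
  by (rule divide_left_mono) auto
lemma fst_less_sets: "{x::'n::finite sa. fst x < c} \<in> sets borel"
proof -
  have "fst -` {..<c} \<inter> space borel \<in> sets (borel :: 'n sa measure)"
    by (rule measurable_sets[OF fst_meas]) simp
  moreover have "fst -` {..<c} \<inter> space borel = {x::'n sa. fst x < c}" by auto
  ultimately show ?thesis by simp
qed
lemma fst_le_sets: "{x::'n::finite sa. fst x \<le> c} \<in> sets borel"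
proof -
  have "fst -` {..c} \<inter> space borel \<in> sets (borel :: 'n sa measure)"
    by (rule measurable_sets[OF fst_meas]) simp
  moreover have "fst -` {..c} \<inter> space borel = {x::'n sa. fst x \<le> c}" by auto
  ultimately show ?thesis by simp
qed
lemma fst_ge_sets: "{x::'n::finite sa. c \<le> fst x} \<in> sets borel"
proof -
  have "fst -` {c..} \<inter> space borel \<in> sets (borel :: 'n sa measure)"
    by (rule measurable_sets[OF fst_meas]) simp
  moreover have "fst -` {c..} \<inter> space borel = {x::'n sa. c \<le> fst x}" by auto
  ultimately show ?thesis by simp
qed

lemma pow_Sigma:
  fixes f :: "'n::finite \<Rightarrow> 'b::comm_monoid_mult"
  shows "(\<Prod>j\<in>UNIV. f j ^ a j) = (\<Prod>p\<in>Sigma (UNIV::'n set) (\<lambda>j. {..<a j}). f (fst p))"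
proof -
  have "(\<Prod>j\<in>UNIV. \<Prod>m<a j. f j) = (\<Prod>p\<in>Sigma (UNIV::'n set) (\<lambda>j. {..<a j}). f (fst p))"
    by (subst prod.Sigma) (auto simp: case_prod_beta)
  then show ?thesis by simp
qed

context gwJ
begin

lemma delta_exists:
  assumes pos: "\<And>i. AE x in J i. 0 < fst x"
  shows "\<exists>\<delta>>0. \<forall>j. emeasure (J j) {x. fst x < \<delta>} \<le> 1/4"
proof -
  define A where "A n = {x::'n sa. fst x < 1 / Suc n}" for n
  have As: "A n \<in> sets (J j)" for n j
    unfolding A_def Js by (rule fst_less_sets)
  have ex: "\<exists>n. emeasure (J j) (A n) \<le> 1/4" for j
  proof -
    interpret P: prob_space "J j" by (rule Jp)
    have dec: "decseq A"
      unfolding decseq_def A_def using inv_suc_mono by (auto intro: less_le_trans)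
    have lim: "(\<lambda>n. emeasure (J j) (A n)) \<longlonglongrightarrow> emeasure (J j) (\<Inter>n. A n)"
      by (rule Lim_emeasure_decseq[OF _ dec]) (use As in auto)
    have I: "(\<Inter>n. A n) = {x. fst x \<le> 0}"
    proof (rule set_eqI)
      fix x :: "'n sa"
      show "x \<in> (\<Inter>n. A n) \<longleftrightarrow> x \<in> {x. fst x \<le> 0}"
      proof
        assume "x \<in> (\<Inter>n. A n)"
        then have h: "fst x < 1 / Suc n" for n by (auto simp: A_def)
        show "x \<in> {x. fst x \<le> 0}"
        proof (rule ccontr)
          assume "x \<notin> {x. fst x \<le> 0}"
          then have "0 < fst x" by simp
          then obtain n where "1 / Suc n < fst x" using nat_approx_posE by blast
          with h[of n] show False by simp
        qed
      next
        assume x0: "x \<in> {x. fst x \<le> 0}"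
        have "fst x < 1 / Suc n" for n
        proof -
          have "0 < 1 / real (Suc n)" by simp
          moreover have "fst x \<le> 0" using x0 by simp
          ultimately show ?thesis by linarith
        qed
        then show "x \<in> (\<Inter>n. A n)" by (simp add: A_def)
      qed
    qed
    have N: "{x \<in> space (J j). \<not> 0 < fst x} = {x. fst x \<le> 0}" by auto
    have "emeasure (J j) {x. fst x \<le> 0} = 0"
      using AE_iff_measurable[OF _ N] pos[of j] fst_le_sets[of 0] by (simp add: Js)
    then have "(\<lambda>n. emeasure (J j) (A n)) \<longlonglongrightarrow> 0" using lim I by simp
    then have "eventually (\<lambda>n. emeasure (J j) (A n) < 1/4) sequentially"
      by (rule order_tendstoD) (simp add: ennreal_zero_less_divide)
    then obtain n where "emeasure (J j) (A n) < 1/4"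
      using eventually_happens'[OF sequentially_bot] by blast
    then show ?thesis by (intro exI[of _ n]) simp
  qed
  then obtain f where f: "\<And>j. emeasure (J j) (A (f j)) \<le> 1/4" by metis
  define N where "N = Max (range f)"
  have fN: "f j \<le> N" for j unfolding N_def by (rule Max_ge) auto
  have sub: "A N \<subseteq> A (f j)" for j
    using inv_suc_mono[OF fN[of j]] unfolding A_def by (auto intro: less_le_trans)
  have le: "emeasure (J j) (A N) \<le> 1/4" for j
    using emeasure_mono[OF sub[of j] As] f[of j] by (rule order.trans)
  have "0 < 1 / real (Suc N)" by simp
  moreover have "\<forall>j. emeasure (J j) {x. fst x < 1 / real (Suc N)} \<le> 1/4"
    using le by (simp add: A_def)
  ultimately show ?thesis by blast
qed

lemma E_le1:
  assumes "\<And>k c \<omega>. 0 \<le> tr w s k c \<omega> \<and> tr w s k c \<omega> \<le> 1"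
  shows "(\<integral>\<^sup>+\<omega>. ennreal (tr w s k j \<omega>) \<partial>G j) \<le> 1"
proof -
  interpret P: prob_space "G j" by (rule prob_G)
  have "(\<integral>\<^sup>+\<omega>. ennreal (tr w s k j \<omega>) \<partial>G j) \<le> (\<integral>\<^sup>+\<omega>. 1 \<partial>G j)"
    using assms by (intro nn_integral_mono) simp
  also have "\<dots> = 1" using P.emeasure_space_1 by simp
  finally show ?thesis .
qed

lemma Inf_sets: "{\<omega>::('n \<times> nat) list \<Rightarrow> 'n sa. \<forall>k. \<not> ht k \<omega>} \<in> sets SG"
proof -
  have "{\<omega>::('n \<times> nat) list \<Rightarrow> 'n sa. ht k \<omega>} \<in> sets SG" for k
  proof -
    have "(\<lambda>\<omega>::('n \<times> nat) list \<Rightarrow> 'n sa. ht k \<omega>) -` {True} \<inter> space SG \<in> sets SG"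
      by (rule measurable_sets[OF ht_meas]) simp
    moreover have "(\<lambda>\<omega>::('n \<times> nat) list \<Rightarrow> 'n sa. ht k \<omega>) -` {True} \<inter> space SG = {\<omega>. ht k \<omega>}" by auto
    ultimately show ?thesis by simp
  qed
  then have "space SG - {\<omega>::('n \<times> nat) list \<Rightarrow> 'n sa. ht k \<omega>} \<in> sets SG" for k
    by (rule sets.compl_sets)
  then have "(\<Inter>k. space SG - {\<omega>::('n \<times> nat) list \<Rightarrow> 'n sa. ht k \<omega>}) \<in> sets SG"
    by (intro sets.countable_INT) blast+
  moreover have "(\<Inter>k. space SG - {\<omega>::('n \<times> nat) list \<Rightarrow> 'n sa. ht k \<omega>}) = {\<omega>. \<forall>k. \<not> ht k \<omega>}" by auto
  ultimately show ?thesis by simp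
qed

lemma INF_AE:
  assumes pos: "\<And>i. AE x in J i. 0 < fst x"
  shows "AE \<omega> in G i. (\<forall>k. \<not> ht k \<omega>) \<longrightarrow> busy \<omega> = \<top>"
proof -
  obtain \<delta> where d0: "0 < \<delta>" and dJ: "\<And>j. emeasure (J j) {x. fst x < \<delta>} \<le> 1/4"
    using delta_exists[OF pos] by blast
  define v where "v x = (if \<delta> \<le> fst x then 1/4 else (1::real))" for x :: "'n sa"
  define \<kappa> where "\<kappa> = ln 4 / \<delta>"
  have k0: "0 \<le> \<kappa>" using d0 by (simp add: \<kappa>_def)
  have v0: "0 \<le> v x" and v1: "v x \<le> 1" for x by (auto simp: v_def)
  have vm: "v \<in> borel_measurable borel"
  proof -
    have "(\<lambda>x::'n sa. if x \<in> {x. \<delta> \<le> fst x} then 1/4 else (1::real)) \<in> borel_measurable borel"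
      by (rule measurable_If_set) (simp_all add: fst_ge_sets)
    then show ?thesis by (simp add: v_def[abs_def])
  qed
  have vge: "exp (- \<kappa> * max 0 (fst x)) \<le> v x" for x
  proof (cases "\<delta> \<le> fst x")
    case True
    have "ln 4 \<le> \<kappa> * fst x" using True d0 by (simp add: \<kappa>_def field_simps mult_left_mono)
    then have "exp (- \<kappa> * max 0 (fst x)) \<le> exp (- ln 4)" using True d0 by simp
    also have "\<dots> = 1/4" by (simp add: exp_minus)
    finally show ?thesis using True by (simp add: v_def)
  next
    case False
    have "exp (- \<kappa> * max 0 (fst x)) \<le> 1" using k0 by simp
    then show ?thesis using False by (simp add: v_def)
  qed
  have vint: "(\<integral>\<^sup>+x. ennreal (v x) \<partial>J j) \<le> ennreal (1/2)" for j
  proof -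
    interpret P: prob_space "J j" by (rule Jp)
    have "(\<integral>\<^sup>+x. ennreal (v x) \<partial>J j) \<le> (\<integral>\<^sup>+x. ennreal (1/4) + indicator {x. fst x < \<delta>} x \<partial>J j)"
      by (intro nn_integral_mono) (auto simp: v_def split: split_indicator)
    also have "\<dots> = ennreal (1/4) + emeasure (J j) {x. fst x < \<delta>}"
    proof -
      have S: "{x. fst x < \<delta>} \<in> sets (J j)" using fst_less_sets[of \<delta>] by (simp add: Js)
      have "(\<integral>\<^sup>+x. ennreal (1/4) + indicator {x. fst x < \<delta>} x \<partial>J j) = (\<integral>\<^sup>+x. ennreal (1/4) \<partial>J j) + (\<integral>\<^sup>+x. indicator {x. fst x < \<delta>} x \<partial>J j)"
        by (rule nn_integral_add) (auto intro: borel_measurable_indicator S)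
      then show ?thesis using S P.emeasure_space_1 by simp
    qed
    also have "\<dots> \<le> ennreal (1/4) + ennreal (1/4)"
    proof -
      have "ennreal (1/4) = ennreal 1 / 4" by (rule ennreal_divide_numeral[symmetric]) simp
      then show ?thesis using dJ[of j] by (intro add_left_mono) simp
    qed
    also have "\<dots> = ennreal (1/2)" by (simp flip: ennreal_plus)
    finally show ?thesis .
  qed
  have trr: "0 \<le> tr v s k c \<omega> \<and> tr v s k c \<omega> \<le> 1" if "\<And>j. 0 \<le> s j" "\<And>j. s j \<le> 1" for s k c \<omega>
    by (rule tr_range) (use v0 v1 that in auto)
  have tr1: "0 \<le> tr v (\<lambda>_. 1) k c \<omega> \<and> tr v (\<lambda>_. 1) k c \<omega> \<le> 1" for k c \<omega> by (rule trr) auto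
  have tr0: "0 \<le> tr v (\<lambda>_. 0) k c \<omega> \<and> tr v (\<lambda>_. 0) k c \<omega> \<le> 1" for k c \<omega> by (rule trr) auto
  define EQ where "EQ k j = (\<integral>\<^sup>+\<omega>. ennreal (tr v (\<lambda>_. 1) k j \<omega>) \<partial>G j)" for k j
  define EZ where "EZ k j = (\<integral>\<^sup>+\<omega>. ennreal (tr v (\<lambda>_. 0) k j \<omega>) \<partial>G j)" for k j
  define q where "q k j = enn2real (EQ k j)" for k j
  define z where "z k j = enn2real (EZ k j)" for k j
  have EQq: "EQ k j = ennreal (q k j)" for k j
  proof -
    have "EQ k j \<noteq> top" unfolding EQ_def by (rule neq_top_trans[OF ennreal_one_neq_top E_le1[OF tr1]])
    then show ?thesis unfolding q_def by (simp add: less_top)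
  qed
  have EZz: "EZ k j = ennreal (z k j)" for k j
  proof -
    have "EZ k j \<noteq> top" unfolding EZ_def by (rule neq_top_trans[OF ennreal_one_neq_top E_le1[OF tr0]])
    then show ?thesis unfolding z_def by (simp add: less_top)
  qed
  have q01: "0 \<le> q k j" "q k j \<le> 1" for k j
    using E_le1[OF tr1, where k=k and j=j] by (auto simp: q_def EQ_def intro: enn2real_leI)
  have z0: "0 \<le> z k j" for k j by (simp add: z_def)
  have zq: "z k j \<le> q k j" for k j
  proof -
    have "EZ k j \<le> EQ k j"
      unfolding EZ_def EQ_def
      by (intro nn_integral_mono) (simp add: tr_zero_eq tr1)
    then show ?thesis by (simp add: EZz EQq ennreal_le_iff q01)
  qed
  have recQ: "ennreal (q (Suc k) i) = (\<integral>\<^sup>+x. ennreal (v x * (\<Prod>j\<in>UNIV. q k j ^ snd x j)) \<partial>J i)" for k i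
  proof -
    have "ennreal (q (Suc k) i) = (\<integral>\<^sup>+x. ennreal (v x) * (\<Prod>j\<in>UNIV. (EQ k j) ^ snd x j) \<partial>J i)"
      unfolding EQq[symmetric] unfolding EQ_def by (rule tr_rec_int[OF vm v0]) (simp add: tr1)
    then show ?thesis
      by (simp add: EQq ennreal_power q01 prod_ennreal prod_nonneg ennreal_mult v0)
  qed
  have recZ: "ennreal (z (Suc k) i) = (\<integral>\<^sup>+x. ennreal (v x * (\<Prod>j\<in>UNIV. z k j ^ snd x j)) \<partial>J i)" for k i
  proof -
    have "ennreal (z (Suc k) i) = (\<integral>\<^sup>+x. ennreal (v x) * (\<Prod>j\<in>UNIV. (EZ k j) ^ snd x j) \<partial>J i)"
      unfolding EZz[symmetric] unfolding EZ_def by (rule tr_rec_int[OF vm v0]) (simp add: tr0)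
    then show ?thesis
      by (simp add: EZz ennreal_power z0 prod_ennreal prod_nonneg ennreal_mult v0)
  qed
  have qhalf: "q (Suc k) i \<le> 1/2" for k i
  proof -
    have "ennreal (q (Suc k) i) \<le> (\<integral>\<^sup>+x. ennreal (v x) \<partial>J i)"
      unfolding recQ
    proof (intro nn_integral_mono ennreal_leI)
      fix x :: "'n sa"
      have "(\<Prod>j\<in>UNIV. q k j ^ snd x j) \<le> 1"
        using q01 by (intro prod_le_1 conjI zero_le_power power_le_one) auto
      then show "v x * (\<Prod>j\<in>UNIV. q k j ^ snd x j) \<le> v x"
        using v0[of x] by (simp add: mult_left_le)
    qed
    also have "\<dots> \<le> ennreal (1/2)" by (rule vint)
    finally have h1: "ennreal (q (Suc k) i) \<le> ennreal (1/2)" .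
    have h: "0 \<le> (1/2::real)" by simp
    from ennreal_le_iff[OF h] h1 show ?thesis by blast
  qed
  have claim: "q k j \<le> z k j + (1/2)^k" for k j
  proof (induction k arbitrary: j)
    case 0 then show ?case using q01[of 0 j] z0[of 0 j] by simp
  next
    case (Suc k)
    define d :: real where "d = (1/2)^k"
    have d0: "0 \<le> d" by (simp add: d_def)
    have pw: "(\<Prod>j\<in>UNIV. q k j ^ a j) \<le> (\<Prod>j\<in>UNIV. z k j ^ a j) + d" for a :: "'n \<Rightarrow> nat"
    proof (cases k)
      case 0
      have "(\<Prod>j\<in>UNIV. q k j ^ a j) \<le> 1"
        using q01 by (intro prod_le_1 conjI zero_le_power power_le_one) auto
      moreover have "0 \<le> (\<Prod>j\<in>UNIV. z k j ^ a j)" using z0 by (intro prod_nonneg) auto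
      ultimately show ?thesis using 0 by (simp add: d_def)
    next
      case (Suc k')
      show ?thesis
        unfolding pow_Sigma
        by (rule PL) (use Suc.IH zq z0 qhalf d0 Suc in \<open>auto simp: d_def\<close>)
    qed
    have "ennreal (q (Suc k) j) \<le> (\<integral>\<^sup>+x. ennreal (v x * (\<Prod>j\<in>UNIV. z k j ^ snd x j)) + ennreal d * ennreal (v x) \<partial>J j)"
      unfolding recQ
    proof (intro nn_integral_mono)
      fix x :: "'n sa"
      have "v x * (\<Prod>j\<in>UNIV. q k j ^ snd x j) \<le> v x * ((\<Prod>j\<in>UNIV. z k j ^ snd x j) + d)"
        by (rule mult_left_mono[OF pw v0])
      also have "\<dots> = v x * (\<Prod>j\<in>UNIV. z k j ^ snd x j) + d * v x" by (simp add: algebra_simps)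
      finally have "ennreal (v x * (\<Prod>j\<in>UNIV. q k j ^ snd x j)) \<le> ennreal (v x * (\<Prod>j\<in>UNIV. z k j ^ snd x j) + d * v x)"
        by (rule ennreal_leI)
      also have "\<dots> = ennreal (v x * (\<Prod>j\<in>UNIV. z k j ^ snd x j)) + ennreal d * ennreal (v x)"
        using v0 d0 z0 by (simp add: ennreal_plus ennreal_mult prod_nonneg)
      finally show "ennreal (v x * (\<Prod>j\<in>UNIV. q k j ^ snd x j)) \<le> ennreal (v x * (\<Prod>j\<in>UNIV. z k j ^ snd x j)) + ennreal d * ennreal (v x)" .
    qed
    also have "\<dots> = ennreal (z (Suc k) j) + ennreal d * (\<integral>\<^sup>+x. ennreal (v x) \<partial>J j)"
    proof -
      have m1: "(\<lambda>x. ennreal (v x * (\<Prod>j\<in>UNIV. z k j ^ snd x j))) \<in> borel_measurable (J j)"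
      proof -
        have "(\<lambda>x::'n sa. (\<Prod>j\<in>UNIV. z k j ^ snd x j)) \<in> borel_measurable borel"
          by (rule measurable_compose_countable[OF _ snd_meas]) simp
        then have "(\<lambda>x. ennreal (v x * (\<Prod>j\<in>UNIV. z k j ^ snd x j))) \<in> borel_measurable borel"
          by (intro measurable_compose[OF _ measurable_ennreal] borel_measurable_times vm)
        then show ?thesis using measurable_cong_sets[OF Js refl] by blast
      qed
      have m2: "(\<lambda>x. ennreal (v x)) \<in> borel_measurable (J j)"
        using measurable_compose[OF vm measurable_ennreal] measurable_cong_sets[OF Js refl] by blast
      have m3: "(\<lambda>x. ennreal d * ennreal (v x)) \<in> borel_measurable (J j)"
        by (intro borel_measurable_times_ennreal measurable_const m2) simp
      have "(\<integral>\<^sup>+x. ennreal (v x * (\<Prod>j\<in>UNIV. z k j ^ snd x j)) + ennreal d * ennreal (v x) \<partial>J j)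
         = (\<integral>\<^sup>+x. ennreal (v x * (\<Prod>j\<in>UNIV. z k j ^ snd x j)) \<partial>J j) + (\<integral>\<^sup>+x. ennreal d * ennreal (v x) \<partial>J j)"
        by (rule nn_integral_add[OF m1 m3])
      also have "(\<integral>\<^sup>+x. ennreal d * ennreal (v x) \<partial>J j) = ennreal d * (\<integral>\<^sup>+x. ennreal (v x) \<partial>J j)"
        by (rule nn_integral_cmult[OF m2])
      finally show ?thesis by (simp add: recZ)
    qed
    also have "\<dots> \<le> ennreal (z (Suc k) j) + ennreal d * ennreal (1/2)"
      by (intro add_left_mono mult_left_mono vint) simp
    also have "\<dots> = ennreal (z (Suc k) j + (1/2)^(Suc k))"
    proof -
      have e1: "ennreal d * ennreal (1/2) = ennreal (d * (1/2))" by (rule ennreal_mult[symmetric]) (use d0 in auto)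
      have e2: "d * (1/2) = (1/2::real)^(Suc k)" by (simp add: d_def)
      have e3: "ennreal (z (Suc k) j + (1/2)^(Suc k)) = ennreal (z (Suc k) j) + ennreal ((1/2)^(Suc k))"
        by (rule ennreal_plus) (use z0 in auto)
      show ?thesis by (simp only: e1 e2 e3)
    qed
    finally have h1: "ennreal (q (Suc k) j) \<le> ennreal (z (Suc k) j + (1/2)^(Suc k))" .
    have h: "0 \<le> z (Suc k) j + (1/2::real)^(Suc k)" using z0 by (simp add: add_nonneg_nonneg)
    from ennreal_le_iff[OF h] h1 show ?case by blast
  qed
  define Inf where "Inf = {\<omega>::('n \<times> nat) list \<Rightarrow> 'n sa. \<forall>k. \<not> ht k \<omega>}"
  define Y where "Y \<omega> = ennreal (lt_enn \<kappa> (busy \<omega>)) * indicator Inf \<omega>" for \<omega>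
  have Ym: "Y \<in> borel_measurable (G i)"
  proof -
    have "Y \<in> borel_measurable SG" unfolding Y_def[abs_def]
      by (intro borel_measurable_times_ennreal measurable_compose[OF lt_busy_meas measurable_ennreal] borel_measurable_indicator)
        (simp add: Inf_def Inf_sets)
    then show ?thesis by (rule G_meas)
  qed
  have Ypw: "Y \<omega> + ennreal (tr v (\<lambda>_. 0) k i \<omega>) \<le> ennreal (tr v (\<lambda>_. 1) k i \<omega>)" for k \<omega>
  proof (cases "\<omega> \<in> Inf")
    case True
    then have "\<not> ht k \<omega>" by (simp add: Inf_def)
    then have "tr v (\<lambda>_. 0) k i \<omega> = 0" by (simp add: tr_zero_eq)
    moreover have "lt_enn \<kappa> (busy \<omega>) \<le> tr v (\<lambda>_. 1) k i \<omega>" by (rule lt_le_tr[OF k0 vge])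
    ultimately show ?thesis using True by (simp add: Y_def ennreal_leI)
  next
    case False
    then show ?thesis using tr1[of k i \<omega>] by (simp add: Y_def tr_zero_eq)
  qed
  have Ybound: "(\<integral>\<^sup>+\<omega>. Y \<omega> \<partial>G i) \<le> ennreal ((1/2)^k)" for k
  proof -
    have tm: "(\<lambda>\<omega>. ennreal (tr v (\<lambda>_. 0) k i \<omega>)) \<in> borel_measurable (G i)"
      by (rule G_meas) (rule measurable_compose[OF tr_meas[OF vm] measurable_ennreal])
    have "(\<integral>\<^sup>+\<omega>. Y \<omega> \<partial>G i) + ennreal (z k i) = (\<integral>\<^sup>+\<omega>. Y \<omega> + ennreal (tr v (\<lambda>_. 0) k i \<omega>) \<partial>G i)"
      by (simp add: nn_integral_add[OF Ym tm] EZz[symmetric] EZ_def)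
    also have "\<dots> \<le> ennreal (q k i)" unfolding EQq[symmetric] EQ_def by (intro nn_integral_mono Ypw)
    also have "\<dots> \<le> ennreal (z k i + (1/2)^k)" by (intro ennreal_leI claim)
    also have "\<dots> = ennreal (z k i) + ennreal ((1/2)^k)" by (rule ennreal_plus) (use z0 in auto)
    finally have "ennreal (z k i) + (\<integral>\<^sup>+\<omega>. Y \<omega> \<partial>G i) \<le> ennreal (z k i) + ennreal ((1/2)^k)"
      by (simp add: add.commute)
    then show ?thesis by (simp add: ennreal_add_left_cancel_le)
  qed
  have Y0: "(\<integral>\<^sup>+\<omega>. Y \<omega> \<partial>G i) = 0"
  proof -
    have lim: "(\<lambda>k. ennreal ((1/2::real)^k)) \<longlonglongrightarrow> ennreal 0"
      by (intro tendsto_ennrealI LIMSEQ_power_zero) simp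
    have "(\<integral>\<^sup>+\<omega>. Y \<omega> \<partial>G i) \<le> ennreal 0"
      by (rule LIMSEQ_le_const[OF lim]) (use Ybound in blast)
    then show ?thesis by simp
  qed
  then have "AE \<omega> in G i. Y \<omega> = 0" using nn_integral_0_iff_AE[OF Ym] by simp
  then show ?thesis
  proof (rule AE_mp, intro AE_I2 impI)
    fix \<omega> assume Y: "Y \<omega> = 0" and I: "\<forall>k. \<not> ht k \<omega>"
    then have "ennreal (lt_enn \<kappa> (busy \<omega>)) = 0" by (simp add: Y_def Inf_def)
    then have "lt_enn \<kappa> (busy \<omega>) \<le> 0" using ennreal_eq_0_iff by blast
    then show "busy \<omega> = \<top>" by (auto simp: lt_enn_def split: if_splits)
  qed
qed

lemma minimal:
  assumes pos: "\<And>i. AE x in J i. 0 < fst x" and th: "0 \<le> \<theta>"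
    and c0: "\<And>i. 0 \<le> c i" and cfix: "\<And>i. ennreal (c i) = sa_transform (J i) \<theta> c"
  shows "busy_transform (J i) J \<theta> \<le> c i"
proof -
  define w0 where "w0 x = exp (- \<theta> * max 0 (fst x))" for x :: "'n sa"
  have w0m: "w0 \<in> borel_measurable borel"
    unfolding w0_def[abs_def]
    by (intro measurable_compose[OF fst_meas] borel_measurable_continuous_onI continuous_intros)
  have w0nn: "0 \<le> w0 x" for x by (simp add: w0_def)
  have Leq: "tr w0 (\<lambda>_. 0) k c' \<omega> = (if ht k \<omega> then lt_enn \<theta> (busy \<omega>) else 0)" for k c' \<omega>
    by (rule L_eq) (simp add: w0_def)
  have trnn: "0 \<le> tr w0 (\<lambda>_. 0) k c' \<omega>" for k c' \<omega> by (simp add: Leq lt_nonneg)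
  define E where "E k j = (\<integral>\<^sup>+\<omega>. ennreal (tr w0 (\<lambda>_. 0) k j \<omega>) \<partial>G j)" for k j
  have Ebound: "E k j \<le> ennreal (c j)" for k j
  proof (induction k arbitrary: j)
    case 0 then show ?case by (simp add: E_def)
  next
    case (Suc k)
    have "E (Suc k) j = (\<integral>\<^sup>+x. ennreal (w0 x) * (\<Prod>j'\<in>UNIV. (E k j') ^ snd x j') \<partial>J j)"
      unfolding E_def by (rule tr_rec_int[OF w0m w0nn trnn])
    also have "\<dots> \<le> (\<integral>\<^sup>+x. ennreal (w0 x) * (\<Prod>j'\<in>UNIV. (ennreal (c j')) ^ snd x j') \<partial>J j)"
      by (intro nn_integral_mono mult_left_mono prod_mono_ennreal power_mono_ennreal Suc.IH) simp
    also have "\<dots> = sa_transform (J j) \<theta> c"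
      unfolding sa_transform_def
    proof (rule nn_integral_cong_AE)
      show "AE x in J j. ennreal (w0 x) * (\<Prod>j'\<in>UNIV. ennreal (c j') ^ snd x j') =
          ennreal (exp (- \<theta> * fst x) * (\<Prod>i\<in>UNIV. c i ^ snd x i))"
        using pos[of j]
      proof eventually_elim
        case (elim x)
        then show ?case
          by (simp add: w0_def ennreal_mult prod_nonneg c0 prod_ennreal ennreal_power max_def)
      qed
    qed
    also have "\<dots> = ennreal (c j)" by (rule cfix[symmetric])
    finally show ?case .
  qed
  have "ennreal (busy_transform (J i) J \<theta>) = (\<integral>\<^sup>+\<omega>. ennreal (lt_enn \<theta> (busy \<omega>)) \<partial>G i)"
    by (rule bt_nn[OF th Jp Js])
  also have "\<dots> = (\<integral>\<^sup>+\<omega>. (SUP k. ennreal (tr w0 (\<lambda>_. 0) k i \<omega>)) \<partial>G i)"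
  proof (rule nn_integral_cong_AE)
    show "AE \<omega> in G i. ennreal (lt_enn \<theta> (busy \<omega>)) = (SUP k. ennreal (tr w0 (\<lambda>_. 0) k i \<omega>))"
      using INF_AE[OF pos, of i]
    proof eventually_elim
      case (elim \<omega>)
      show ?case
      proof (cases "\<exists>k. ht k \<omega>")
        case True
        then obtain k0 where k0: "ht k0 \<omega>" by blast
        show ?thesis
        proof (rule antisym)
          show "ennreal (lt_enn \<theta> (busy \<omega>)) \<le> (SUP k. ennreal (tr w0 (\<lambda>_. 0) k i \<omega>))"
            by (rule SUP_upper2[of k0]) (simp_all add: Leq k0)
          show "(SUP k. ennreal (tr w0 (\<lambda>_. 0) k i \<omega>)) \<le> ennreal (lt_enn \<theta> (busy \<omega>))"
            by (rule SUP_least) (simp add: Leq lt_nonneg)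
        qed
      next
        case False
        then have "busy \<omega> = \<top>" using elim by blast
        then show ?thesis using False by (simp add: Leq lt_enn_def)
      qed
    qed
  qed
  also have "\<dots> = (SUP k. \<integral>\<^sup>+\<omega>. ennreal (tr w0 (\<lambda>_. 0) k i \<omega>) \<partial>G i)"
  proof (rule nn_integral_monotone_convergence_SUP)
    show "incseq (\<lambda>k \<omega>. ennreal (tr w0 (\<lambda>_. 0) k i \<omega>))"
    proof (rule incseq_SucI, rule le_funI)
      fix k and \<omega> :: "('n \<times> nat) list \<Rightarrow> 'n sa"
      have "ht k \<omega> \<Longrightarrow> ht (Suc k) \<omega>" by (rule ht_mono)
      then show "ennreal (tr w0 (\<lambda>_. 0) k i \<omega>) \<le> ennreal (tr w0 (\<lambda>_. 0) (Suc k) i \<omega>)"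
        by (simp only: Leq) (auto simp: lt_nonneg simp del: ht.simps)
    qed
    show "(\<lambda>\<omega>. ennreal (tr w0 (\<lambda>_. 0) k i \<omega>)) \<in> borel_measurable (G i)" for k
      by (rule G_meas) (rule measurable_compose[OF tr_meas[OF w0m] measurable_ennreal])
  qed
  also have "\<dots> \<le> ennreal (c i)"
    by (rule SUP_least) (use Ebound in \<open>simp add: E_def\<close>)
  finally have h1: "ennreal (busy_transform (J i) J \<theta>) \<le> ennreal (c i)" .
  from ennreal_le_iff[OF c0] h1 show ?thesis by blast
qed

end

theorem mainTheorem2:
  fixes J :: "'n::finite \<Rightarrow> 'n sa measure" and \<theta> :: real and b :: "'n \<Rightarrow> real"
  assumes J_prob: "\<forall>i. prob_space (J i)"
    and J_sets: "\<forall>i. sets (J i) = sets borel"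
    and J_pos: "\<forall>i. AE x in J i. fst x > 0"
    and theta: "\<theta> \<ge> 0"
    and b_def: "\<forall>i. b i = busy_transform (J i) J \<theta>"
  shows "(\<forall>V. prob_space V \<and> sets V = sets borel \<and> (AE x in V. fst x \<ge> 0) \<longrightarrow>
            ennreal (busy_transform V J \<theta>) = sa_transform V \<theta> b)
       \<and> (\<forall>i. ennreal (b i) = sa_transform (J i) \<theta> b)
       \<and> (\<forall>c. (\<forall>i. c i \<ge> 0) \<and> (\<forall>i. ennreal (c i) = sa_transform (J i) \<theta> c) \<longrightarrow> (\<forall>i. b i \<le> c i))"
proof -
  interpret gwJ J
    by (rule gwJ.intro) (use J_prob J_sets in blast)+
  have pos: "\<And>i. AE x in J i. 0 < fst x" using J_pos by blast
  have bdef: "\<And>j. b j = busy_transform (J j) J \<theta>" using b_def by blast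
  have A: "\<forall>V. prob_space V \<and> sets V = sets borel \<and> (AE x in V. fst x \<ge> 0) \<longrightarrow>
            ennreal (busy_transform V J \<theta>) = sa_transform V \<theta> b"
  proof (intro allI impI)
    fix V :: "'n sa measure" assume H: "prob_space V \<and> sets V = sets borel \<and> (AE x in V. fst x \<ge> 0)"
    show "ennreal (busy_transform V J \<theta>) = sa_transform V \<theta> b"
      by (rule partA[OF theta conjunct1[OF H] conjunct1[OF conjunct2[OF H]] conjunct2[OF conjunct2[OF H]] bdef])
  qed
  have B: "\<forall>i. ennreal (b i) = sa_transform (J i) \<theta> b"
  proof
    fix i
    have ae: "AE x in J i. 0 \<le> fst x" using pos[of i] by eventually_elim (rule less_imp_le)
    have "ennreal (busy_transform (J i) J \<theta>) = sa_transform (J i) \<theta> b"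
      by (rule partA[OF theta Jp Js ae bdef])
    then show "ennreal (b i) = sa_transform (J i) \<theta> b" by (simp only: bdef[of i])
  qed
  have C: "\<forall>c. (\<forall>i. c i \<ge> 0) \<and> (\<forall>i. ennreal (c i) = sa_transform (J i) \<theta> c) \<longrightarrow> (\<forall>i. b i \<le> c i)"
  proof (intro allI impI)
    fix c :: "'n \<Rightarrow> real" and i assume H: "(\<forall>i. c i \<ge> 0) \<and> (\<forall>i. ennreal (c i) = sa_transform (J i) \<theta> c)"
    have c0: "\<And>i. 0 \<le> c i" using H by blast
    have cf: "\<And>i. ennreal (c i) = sa_transform (J i) \<theta> c" using H by blast
    have "busy_transform (J i) J \<theta> \<le> c i" by (rule minimal[OF pos theta c0 cf])
    then show "b i \<le> c i" by (simp only: bdef[of i])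
  qed
  show ?thesis using A B C by (intro conjI)
qed

end
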